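(* For every state $\rho$ on a finite-dimensional bipartite Hilbert space $\mathcal{H}_A\otimes\mathcal{H}_B$, $$E_{\max}(\rho)=\log\bigl(1+R_g(\rho)\bigr),$$ i.e. the max-relative entropy of entanglement equals the global log robustness of entanglement.
   Context: Logarithms are base 2. $\mathcal{D}$ denotes the set of states and $\mathcal{S}\subset\mathcal{D}$ the set of separable states on $\mathcal{H}_A\otimes\mathcal{H}_B$. For a state $\rho$ and positive operator $\sigma$, $D_{\max}(\rho\|\sigma):=\log\min\{\lambda:\rho\le\lambda\sigma\}$, and $E_{\max}(\rho):=\min_{\sigma\in\mathcal{S}}D_{\max}(\rho\|\sigma)$. The global robustness of entanglement is $R_g(\rho):=\min\{s\ge0:\exists\,\omega\in\mathcal{D}\text{ such that }\tfrac{1}{1+s}\rho+\tfrac{s}{1+s}\omega\in\mathcal{S}\}$. *)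

theory Defs
  imports "HOL-Analysis.Analysis"
begin

text \<open>Operators on a finite-dimensional Hilbert space with orthonormal basis indexed by
  the finite type 'n are complex matrices of type complex^'n^'n.
  The bipartite space H_A (x) H_B has basis indexed by 'a \<times> 'b.\<close>

type_synonym 'n cmat = "complex^'n^'n"

definition qform :: "'n::finite cmat \<Rightarrow> (complex^'n) \<Rightarrow> complex" where
  "qform M v = (\<Sum>i\<in>UNIV. \<Sum>k\<in>UNIV. cnj (v$i) * (M$i$k) * (v$k))"

definition psd :: "'n::finite cmat \<Rightarrow> bool" where
  "psd M \<longleftrightarrow> (\<forall>v. Im (qform M v) = 0 \<and> 0 \<le> Re (qform M v))"

definition loewner_le :: "'n::finite cmat \<Rightarrow> 'n cmat \<Rightarrow> bool" where
  "loewner_le A B \<longleftrightarrow> psd (B - A)"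

definition ctrace :: "'n::finite cmat \<Rightarrow> complex" where
  "ctrace M = (\<Sum>i\<in>UNIV. M$i$i)"

definition states :: "'n::finite cmat set" where
  "states = {M. psd M \<and> ctrace M = 1}"

definition tensor :: "'a::finite cmat \<Rightarrow> 'b::finite cmat \<Rightarrow> ('a \<times> 'b) cmat" where
  "tensor A B = (\<chi> p q. A$(fst p)$(fst q) * B$(snd p)$(snd q))"

definition separable_states :: "('a::finite \<times> 'b::finite) cmat set" where
  "separable_states = convex hull {tensor \<rho>A \<rho>B | \<rho>A \<rho>B. \<rho>A \<in> states \<and> \<rho>B \<in> states}"

definition Dmax :: "'n::finite cmat \<Rightarrow> 'n cmat \<Rightarrow> ereal" where
  "Dmax \<rho> \<sigma> = (if \<exists>l::real. loewner_le \<rho> (l *\<^sub>R \<sigma>)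
      then ereal (log 2 (Inf {l::real. loewner_le \<rho> (l *\<^sub>R \<sigma>)})) else \<infinity>)"

definition Emax :: "('a::finite \<times> 'b::finite) cmat \<Rightarrow> ereal" where
  "Emax \<rho> = (INF \<sigma>\<in>separable_states. Dmax \<rho> \<sigma>)"

definition Rg :: "('a::finite \<times> 'b::finite) cmat \<Rightarrow> real" where
  "Rg \<rho> = Inf {s::real. 0 \<le> s \<and> (\<exists>\<omega>\<in>states.
      (1 / (1 + s)) *\<^sub>R \<rho> + (s / (1 + s)) *\<^sub>R \<omega> \<in> separable_states)}"

end

theory Submission imports Defs begin

lemma qform_diff: "qform (A - B) v = qform A v - qform B v"
  unfolding qform_def by (simp add: ring_distribs sum_subtractf)
lemma qform_add: "qform (A + B) v = qform A v + qform B v"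
  unfolding qform_def by (simp add: ring_distribs sum.distrib)
lemma qform_scaleR: "qform (c *\<^sub>R A) v = of_real c * qform A v"
  unfolding qform_def by (simp add: vector_scaleR_component) (simp add: scaleR_conv_of_real sum_distrib_left mult_ac)
lemma psd_add: "psd A \<Longrightarrow> psd B \<Longrightarrow> psd (A + B)"
  unfolding psd_def by (simp add: qform_add)
lemma psd_scaleR: "0 \<le> c \<Longrightarrow> psd A \<Longrightarrow> psd (c *\<^sub>R A)"
  unfolding psd_def by (simp add: qform_scaleR)
lemma qform_axis: "qform M (axis i 1) = M$i$i"
proof -
  have "\<And>j k. cnj(axis i 1 $ j) * M$j$k * axis i 1 $ k = (if j = i then (if k = i then M$i$i else 0) else 0)"
    by (simp add: axis_def)
  hence "qform M (axis i 1) = (\<Sum>j\<in>UNIV. if j = i then (\<Sum>k\<in>UNIV. if k = i then M$i$i else 0) else 0)"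
    unfolding qform_def by (intro sum.cong) auto
  thus ?thesis by simp
qed
lemma psd_diag: "psd M \<Longrightarrow> 0 \<le> Re (M$i$i)"
  unfolding psd_def using qform_axis by metis
lemma ctrace_diff: "ctrace (A - B) = ctrace A - ctrace B"
  unfolding ctrace_def by (simp add: sum_subtractf)
lemma ctrace_add: "ctrace (A + B) = ctrace A + ctrace B"
  unfolding ctrace_def by (simp add: sum.distrib)
lemma ctrace_scaleR: "ctrace (c *\<^sub>R A) = of_real c * ctrace A"
  unfolding ctrace_def by (simp add: vector_scaleR_component) (simp add: scaleR_conv_of_real sum_distrib_left)
lemma psd_trace: "psd M \<Longrightarrow> 0 \<le> Re (ctrace M)"
  unfolding ctrace_def by (simp add: Re_sum sum_nonneg psd_diag)

lemma ctrace_tensor: "ctrace (tensor A B) = ctrace A * ctrace B"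
  unfolding ctrace_def tensor_def
  by (simp add: sum_product UNIV_Times_UNIV[symmetric] sum.cartesian_product split_beta del: UNIV_Times_UNIV)

lemma sep_trace: "\<sigma> \<in> separable_states \<Longrightarrow> ctrace \<sigma> = 1"
proof -
  have "convex {M::('a::finite\<times>'b::finite) cmat. ctrace M = 1}"
    unfolding convex_def by (auto simp: ctrace_add ctrace_scaleR simp flip: of_real_add)
  moreover have "{tensor \<rho>A \<rho>B | \<rho>A \<rho>B. \<rho>A \<in> states \<and> \<rho>B \<in> states} \<subseteq> {M::('a\<times>'b) cmat. ctrace M = 1}"
    by (auto simp: states_def ctrace_tensor)
  ultimately show "\<sigma> \<in> separable_states \<Longrightarrow> ctrace \<sigma> = 1"
    unfolding separable_states_def using hull_minimal[of _ _ convex] by blast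
qed

lemma loewner_ge1:
  assumes "loewner_le \<rho> (l *\<^sub>R \<sigma>)" "\<rho> \<in> states" "ctrace \<sigma> = 1"
  shows "1 \<le> l"
proof -
  have "0 \<le> Re (ctrace (l *\<^sub>R \<sigma> - \<rho>))" using assms(1) psd_trace loewner_le_def by blast
  thus ?thesis using assms by (simp add: ctrace_diff ctrace_scaleR states_def)
qed

lemma qform_diag: "qform ((\<chi> i j. if i = j then of_real c else 0)::'n::finite cmat) v = of_real (c * (\<Sum>i\<in>UNIV. (cmod (v$i))^2))"
proof -
  have "\<And>i. (\<Sum>k\<in>UNIV. cnj (v$i) * ((\<chi> i j. if i = j then of_real c else 0)::'n cmat)$i$k * v$k) = of_real c * (cnj (v$i) * v$i)"
  proof -
    fix i
    have "(\<Sum>k\<in>UNIV. cnj (v$i) * ((\<chi> i j. if i = j then of_real c else 0)::'n cmat)$i$k * v$k)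
       = (\<Sum>k\<in>UNIV. if k = i then of_real c * (cnj (v$i) * v$i) else 0)"
      by (intro sum.cong) auto
    thus "?thesis i" by simp
  qed
  hence "qform ((\<chi> i j. if i = j then of_real c else 0)::'n::finite cmat) v = (\<Sum>i\<in>UNIV. of_real c * (cnj (v$i) * v$i))"
    unfolding qform_def by simp
  also have "\<dots> = (\<Sum>i\<in>UNIV. of_real (c * (cmod (v$i))^2))"
    by (intro sum.cong) (auto simp del: of_real_power simp: complex_norm_square mult.commute)
  finally show ?thesis by (simp add: sum_distrib_left)
qed

lemma psd_diag_mat: "0 \<le> c \<Longrightarrow> psd ((\<chi> i j. if i = j then of_real c else 0)::'n::finite cmat)"
  unfolding psd_def qform_diag by (simp add: sum_nonneg)

lemma ctrace_diag_mat: "ctrace ((\<chi> i j. if i = j then of_real c else 0)::'n::finite cmat) = of_real (c * real CARD('n))"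
  unfolding ctrace_def by simp

lemma qform_bound: "Re (qform M v) \<le> (\<Sum>i\<in>UNIV. \<Sum>k\<in>UNIV. cmod (M$i$k)) * (\<Sum>j\<in>UNIV. (cmod (v$j))^2)"
proof -
  define N where "N = (\<Sum>j\<in>UNIV. (cmod (v$j))^2)"
  have vle: "cmod (v$j) \<le> sqrt N" for j
  proof -
    have "(cmod (v$j))^2 \<le> N" unfolding N_def by (rule member_le_sum) auto
    thus ?thesis by (rule real_le_rsqrt)
  qed
  have N0: "0 \<le> N" unfolding N_def by (simp add: sum_nonneg)
  have pr: "cmod (v$i) * cmod (v$k) \<le> N" for i k
  proof -
    have "cmod (v$i) * cmod (v$k) \<le> sqrt N * sqrt N"
      using N0 by (intro mult_mono vle) auto
    thus ?thesis using N0 by simp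
  qed
  have "Re (qform M v) \<le> cmod (qform M v)" by (rule complex_Re_le_cmod)
  also have "\<dots> \<le> (\<Sum>i\<in>UNIV. cmod (\<Sum>k\<in>UNIV. cnj (v$i) * (M$i$k) * (v$k)))"
    unfolding qform_def by (rule norm_sum)
  also have "\<dots> \<le> (\<Sum>i\<in>UNIV. \<Sum>k\<in>UNIV. cmod (cnj (v$i) * (M$i$k) * (v$k)))"
    by (intro sum_mono norm_sum)
  also have "\<dots> \<le> (\<Sum>i\<in>UNIV. \<Sum>k\<in>UNIV. cmod (M$i$k) * N)"
  proof (intro sum_mono)
    fix i k
    have "cmod (cnj (v$i) * (M$i$k) * (v$k)) = cmod (M$i$k) * (cmod (v$i) * cmod (v$k))"
      by (simp add: norm_mult)
    also have "\<dots> \<le> cmod (M$i$k) * N" by (intro mult_left_mono pr) auto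
    finally show "cmod (cnj (v$i) * (M$i$k) * (v$k)) \<le> cmod (M$i$k) * N" .
  qed
  finally show ?thesis unfolding N_def by (simp add: sum_distrib_right)
qed

lemma exists_bound:
  fixes \<rho> :: "('a::finite \<times> 'b::finite) cmat"
  assumes "psd \<rho>"
  shows "\<exists>\<tau> c0. \<tau> \<in> separable_states \<and> loewner_le \<rho> (c0 *\<^sub>R \<tau>) \<and> 1 < c0"
proof -
  define dA where "dA = real CARD('a)"
  define dB where "dB = real CARD('b)"
  have dA: "1 \<le> dA" unfolding dA_def by (simp add: Suc_leI)
  have dB: "1 \<le> dB" unfolding dB_def by (simp add: Suc_leI)
  define Ia :: "'a cmat" where "Ia = (\<chi> i j. if i = j then of_real (1/dA) else 0)"
  define Ib :: "'b cmat" where "Ib = (\<chi> i j. if i = j then of_real (1/dB) else 0)"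
  have Ia: "Ia \<in> states" unfolding states_def Ia_def
    using dA by (simp add: psd_diag_mat ctrace_diag_mat dA_def)
  have Ib: "Ib \<in> states" unfolding states_def Ib_def
    using dB by (simp add: psd_diag_mat ctrace_diag_mat dB_def)
  define \<tau> where "\<tau> = tensor Ia Ib"
  have tsep: "\<tau> \<in> separable_states"
    unfolding separable_states_def \<tau>_def using Ia Ib by (intro hull_inc) blast
  have teq: "\<tau> = (\<chi> p q. if p = q then of_real (1/(dA*dB)) else 0)"
    unfolding \<tau>_def tensor_def Ia_def Ib_def
    by (simp add: vec_eq_iff)
  define S where "S = (\<Sum>i\<in>UNIV. \<Sum>k\<in>UNIV. cmod (\<rho>$i$k))"
  have S0: "0 \<le> S" unfolding S_def by (simp add: sum_nonneg)
  define c0 where "c0 = (S + 2) * (dA * dB)"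
  have c0: "1 < c0"
    proof -
    have "1*1 \<le> dA*dB" by (rule mult_mono) (use dA dB in auto)
    hence "2*1 \<le> (S+2)*(dA*dB)" by (intro mult_mono) (use S0 in auto)
    thus ?thesis unfolding c0_def by simp
  qed
  have "loewner_le \<rho> (c0 *\<^sub>R \<tau>)"
    unfolding loewner_le_def psd_def
  proof
    fix v :: "complex^('a\<times>'b)"
    define N where "N = (\<Sum>j\<in>UNIV. (cmod (v$j))^2)"
    have N0: "0 \<le> N" unfolding N_def by (simp add: sum_nonneg)
    have q: "qform (c0 *\<^sub>R \<tau> - \<rho>) v = of_real ((S+2) * N) - qform \<rho> v"
      proof -
      have e: "c0 * (1/(dA*dB) * N) = (S+2)*N" using dA dB unfolding c0_def by (simp add: field_simps)
      show ?thesis unfolding qform_diff qform_scaleR teq qform_diag N_def[symmetric]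
        by (simp flip: of_real_mult e)
    qed
    have b: "Re (qform \<rho> v) \<le> S * N" unfolding S_def N_def by (rule qform_bound)
    have "S * N \<le> (S+2) * N" using N0 by (intro mult_right_mono) auto
    thus "Im (qform (c0 *\<^sub>R \<tau> - \<rho>) v) = 0 \<and> 0 \<le> Re (qform (c0 *\<^sub>R \<tau> - \<rho>) v)"
      using assms b unfolding q psd_def by simp
  qed
  thus ?thesis using tsep c0 by blast
qed

theorem lemma5:
  fixes \<rho> :: "('a::finite \<times> 'b::finite) cmat"
  assumes "\<rho> \<in> states"
  shows "Emax \<rho> = ereal (log 2 (1 + Rg \<rho>))"
proof -
  have rs: "psd \<rho>" "ctrace \<rho> = 1" using assms by (auto simp: states_def)
  define A where "A = {l::real. \<exists>\<sigma>\<in>separable_states. loewner_le \<rho> (l *\<^sub>R \<sigma>)}"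
  define B where "B = {s::real. 0 \<le> s \<and> (\<exists>\<omega>\<in>states.
      (1 / (1 + s)) *\<^sub>R \<rho> + (s / (1 + s)) *\<^sub>R \<omega> \<in> separable_states)}"
  have Rg: "Rg \<rho> = Inf B" unfolding Rg_def B_def ..
  obtain \<tau> c0 where \<tau>: "\<tau> \<in> separable_states" "loewner_le \<rho> (c0 *\<^sub>R \<tau>)" "1 < c0"
    using exists_bound[OF rs(1)] by blast
  have A1: "1 \<le> l" if "l \<in> A" for l
    using that assms loewner_ge1 sep_trace unfolding A_def by blast
  have c0A: "c0 \<in> A" unfolding A_def using \<tau> by blast
  have bddA: "bdd_below A" using A1 by (meson bdd_belowI)
  define a where "a = Inf A"
  have a1: "1 \<le> a" unfolding a_def using c0A A1 by (intro cInf_greatest) auto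
  have aA: "a \<le> l" if "l \<in> A" for l unfolding a_def using that bddA by (rule cInf_lower)
  have Bsub: "1 + s \<in> A" if "s \<in> B" for s
  proof -
    from that obtain \<omega> where s0: "0 \<le> s" and \<omega>: "\<omega> \<in> states"
      and sep: "(1 / (1 + s)) *\<^sub>R \<rho> + (s / (1 + s)) *\<^sub>R \<omega> \<in> separable_states"
      unfolding B_def by blast
    have "(1 + s) *\<^sub>R ((1 / (1 + s)) *\<^sub>R \<rho> + (s / (1 + s)) *\<^sub>R \<omega>) - \<rho> = s *\<^sub>R \<omega>"
      using s0 by (simp add: scaleR_add_right)
    moreover have "psd (s *\<^sub>R \<omega>)" using \<omega> s0 by (simp add: states_def psd_scaleR)
    ultimately have "loewner_le \<rho> ((1 + s) *\<^sub>R ((1 / (1 + s)) *\<^sub>R \<rho> + (s / (1 + s)) *\<^sub>R \<omega>))"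
      unfolding loewner_le_def by simp
    thus ?thesis unfolding A_def using sep by blast
  qed
  have Bsup: "l - 1 \<in> B" if "l \<in> A" "1 < l" for l
  proof -
    from that(1) obtain \<sigma> where \<sigma>: "\<sigma> \<in> separable_states" "loewner_le \<rho> (l *\<^sub>R \<sigma>)"
      unfolding A_def by blast
    define \<omega> where "\<omega> = (1 / (l - 1)) *\<^sub>R (l *\<^sub>R \<sigma> - \<rho>)"
    have "psd \<omega>" unfolding \<omega>_def using \<sigma>(2) that(2) by (simp add: loewner_le_def psd_scaleR)
    moreover have "ctrace \<omega> = 1"
    proof -
      have "ctrace \<omega> = of_real (1 / (l - 1)) * (of_real l * 1 - 1)"
        unfolding \<omega>_def using sep_trace[OF \<sigma>(1)] rs(2) by (simp add: ctrace_scaleR ctrace_diff)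
      also have "\<dots> = of_real ((1 / (l - 1)) * (l - 1))" by simp
      also have "\<dots> = 1" using that(2) by simp
      finally show ?thesis .
    qed
    ultimately have \<omega>s: "\<omega> \<in> states" by (simp add: states_def)
    have "(1 / (1 + (l - 1))) *\<^sub>R \<rho> + ((l - 1) / (1 + (l - 1))) *\<^sub>R \<omega> = \<sigma>"
    proof -
      have "((l - 1) / l) *\<^sub>R \<omega> = (1 / l) *\<^sub>R (l *\<^sub>R \<sigma> - \<rho>)"
        unfolding \<omega>_def using that(2) by simp
      also have "\<dots> = \<sigma> - (1 / l) *\<^sub>R \<rho>" using that(2) by (simp add: scaleR_diff_right)
      finally show ?thesis by simp
    qed
    moreover have "0 \<le> l - 1" using that(2) by simp
    ultimately show ?thesis unfolding B_def mem_Collect_eq using \<omega>s \<sigma>(1) by blast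
  qed
  have near: "\<exists>l\<in>A. 1 < l \<and> l < a + e" if e: "0 < e" for e
  proof -
    obtain l1 where l1: "l1 \<in> A" "l1 < a + e/2"
      using cInf_lessD[of A "a + e/2"] c0A e unfolding a_def by auto
    from l1 obtain \<sigma> where \<sigma>: "\<sigma> \<in> separable_states" "loewner_le \<rho> (l1 *\<^sub>R \<sigma>)"
      unfolding A_def by blast
    have l11: "1 \<le> l1" using A1 l1 by blast
    define t where "t = min (1/2) (e / (2 * (c0 + 1)))"
    have t0: "0 < t" "t \<le> 1/2"
    proof -
      show "0 < t" unfolding t_def using e \<tau>(3) by simp
      show "t \<le> 1/2" unfolding t_def by (rule min.cobounded1)
    qed
    have tc: "t * c0 \<le> e/2"
    proof -
      have "t * c0 \<le> (e / (2 * (c0 + 1))) * c0" unfolding t_def using \<tau>(3)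
        by (intro mult_right_mono) auto
      also have "\<dots> \<le> e / 2" using e \<tau>(3) by (simp add: field_simps)
      finally show ?thesis .
    qed
    define L where "L = (1 - t) * l1 + t * c0"
    have L0: "0 < L"
    proof -
      have "0 \<le> (1 - t) * l1" using t0 l11 by simp
      moreover have "0 < t * c0" using t0 \<tau>(3) by simp
      ultimately show ?thesis unfolding L_def by linarith
    qed
    have L1: "1 < L"
    proof -
      have "(1 - t) * 1 \<le> (1 - t) * l1" using t0 l11 by (intro mult_left_mono) auto
      moreover have "t * 1 < t * c0" using t0 \<tau>(3) by simp
      ultimately show ?thesis unfolding L_def by simp
    qed
    have La: "L < a + e"
    proof -
      have "(1 - t) * l1 \<le> l1" using t0 l11 by (simp add: algebra_simps)
      thus ?thesis unfolding L_def using tc l1(2) by simp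
    qed
    define \<sigma>' where "\<sigma>' = ((1 - t) * l1 / L) *\<^sub>R \<sigma> + (t * c0 / L) *\<^sub>R \<tau>"
    have sep': "\<sigma>' \<in> separable_states"
      unfolding \<sigma>'_def separable_states_def
    proof (rule convexD[OF convex_convex_hull])
      show "\<sigma> \<in> convex hull {tensor \<rho>A \<rho>B |\<rho>A \<rho>B. \<rho>A \<in> states \<and> \<rho>B \<in> states}"
        using \<sigma>(1) unfolding separable_states_def .
      show "\<tau> \<in> convex hull {tensor \<rho>A \<rho>B |\<rho>A \<rho>B. \<rho>A \<in> states \<and> \<rho>B \<in> states}"
        using \<tau>(1) unfolding separable_states_def .
      show "0 \<le> (1 - t) * l1 / L" using t0 l11 L0 by simp
      show "0 \<le> t * c0 / L" using t0 \<tau>(3) L0 by simp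
      have "(1 - t) * l1 / L + t * c0 / L = L / L"
        by (simp only: add_divide_distrib[symmetric] L_def)
      thus "(1 - t) * l1 / L + t * c0 / L = 1" using L0 by simp
    qed
    have "L *\<^sub>R \<sigma>' = ((1 - t) * l1) *\<^sub>R \<sigma> + (t * c0) *\<^sub>R \<tau>"
      unfolding \<sigma>'_def using L0 by (simp add: scaleR_add_right scaleR_scaleR)
    hence "L *\<^sub>R \<sigma>' - \<rho> = (1 - t) *\<^sub>R (l1 *\<^sub>R \<sigma> - \<rho>) + t *\<^sub>R (c0 *\<^sub>R \<tau> - \<rho>)"
      by (simp add: scaleR_diff_right scaleR_diff_left scaleR_scaleR)
    moreover have "psd ((1 - t) *\<^sub>R (l1 *\<^sub>R \<sigma> - \<rho>) + t *\<^sub>R (c0 *\<^sub>R \<tau> - \<rho>))"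
      using \<sigma>(2) \<tau>(2) t0 unfolding loewner_le_def by (intro psd_add psd_scaleR) auto
    ultimately have "loewner_le \<rho> (L *\<^sub>R \<sigma>')" unfolding loewner_le_def by simp
    hence "L \<in> A" unfolding A_def using sep' by blast
    thus ?thesis using L1 La by blast
  qed
  have Bne: "B \<noteq> {}"
  proof -
    obtain l where "l \<in> A" "1 < l" using near[of 1] by auto
    thus ?thesis using Bsup by blast
  qed
  have bddB: "bdd_below B" unfolding B_def by (rule bdd_belowI[where m=0]) auto
  have InfB: "Inf B = a - 1"
  proof (rule antisym)
    show "a - 1 \<le> Inf B" using Bne
    proof (rule cInf_greatest)
      fix s assume "s \<in> B"
      hence "a \<le> 1 + s" using Bsub aA by blast
      thus "a - 1 \<le> s" by simp
    qed
    show "Inf B \<le> a - 1"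
    proof (rule field_le_epsilon)
      fix e :: real assume "0 < e"
      then obtain l where "l \<in> A" "1 < l" "l < a + e" using near by blast
      hence "Inf B \<le> l - 1" using Bsup bddB by (intro cInf_lower) auto
      thus "Inf B \<le> a - 1 + e" using \<open>l < a + e\<close> by simp
    qed
  qed
  have Dm: "Dmax \<rho> \<sigma> = ereal (log 2 (Inf {l. loewner_le \<rho> (l *\<^sub>R \<sigma>)}))"
     and InfAs: "a \<le> Inf {l. loewner_le \<rho> (l *\<^sub>R \<sigma>)}"
     and InfAs2: "\<And>l. loewner_le \<rho> (l *\<^sub>R \<sigma>) \<Longrightarrow> Inf {l. loewner_le \<rho> (l *\<^sub>R \<sigma>)} \<le> l"
    if "\<sigma> \<in> separable_states" "loewner_le \<rho> (l0 *\<^sub>R \<sigma>)" for \<sigma> l0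
  proof -
    show "Dmax \<rho> \<sigma> = ereal (log 2 (Inf {l. loewner_le \<rho> (l *\<^sub>R \<sigma>)}))"
      unfolding Dmax_def using that by auto
    show "a \<le> Inf {l. loewner_le \<rho> (l *\<^sub>R \<sigma>)}"
      using that by (intro cInf_greatest aA) (auto simp: A_def)
    fix l assume "loewner_le \<rho> (l *\<^sub>R \<sigma>)"
    moreover have "bdd_below {l. loewner_le \<rho> (l *\<^sub>R \<sigma>)}"
      using that A1 by (auto simp: A_def intro!: bdd_belowI[where m=1])
    ultimately show "Inf {l. loewner_le \<rho> (l *\<^sub>R \<sigma>)} \<le> l" by (intro cInf_lower) auto
  qed
  have "Emax \<rho> = ereal (log 2 a)"
  proof (rule antisym)
    show "ereal (log 2 a) \<le> Emax \<rho>"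
      unfolding Emax_def
    proof (rule INF_greatest)
      fix \<sigma> :: "('a \<times> 'b) cmat" assume s: "\<sigma> \<in> separable_states"
      show "ereal (log 2 a) \<le> Dmax \<rho> \<sigma>"
      proof (cases "\<exists>l::real. loewner_le \<rho> (l *\<^sub>R \<sigma>)")
        case True
        then obtain l0 where l0: "loewner_le \<rho> (l0 *\<^sub>R \<sigma>)" by blast
        show ?thesis using Dm[OF s l0] InfAs[OF s l0] a1 by simp
      next
        case False thus ?thesis unfolding Dmax_def by simp
      qed
    qed
    show "Emax \<rho> \<le> ereal (log 2 a)"
    proof (rule ereal_le_epsilon2)
      fix e :: real assume e: "0 < e"
      define r where "r = log 2 a + e"
      have "a < 2 powr r"
      proof -
        have "log 2 a < r" using e unfolding r_def by simp
        thus ?thesis using a1 by (simp add: log_less_iff)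
      qed
      then obtain l where l: "l \<in> A" "l < 2 powr r"
        using cInf_lessD[of A "2 powr r"] c0A unfolding a_def by auto
      then obtain \<sigma> where \<sigma>: "\<sigma> \<in> separable_states" "loewner_le \<rho> (l *\<^sub>R \<sigma>)"
        unfolding A_def by blast
      have "Emax \<rho> \<le> Dmax \<rho> \<sigma>" unfolding Emax_def using \<sigma>(1) by (rule INF_lower)
      also have "\<dots> = ereal (log 2 (Inf {l. loewner_le \<rho> (l *\<^sub>R \<sigma>)}))" by (rule Dm[OF \<sigma>])
      also have "\<dots> \<le> ereal (log 2 l)"
        using InfAs2[OF \<sigma> \<sigma>(2)] InfAs[OF \<sigma>] a1 by simp
      also have "\<dots> \<le> ereal r"
      proof -
        have "log 2 l < r" using l(2) A1[OF l(1)] by (simp add: log_less_iff)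
        thus ?thesis by simp
      qed
      finally show "Emax \<rho> \<le> ereal (log 2 a) + ereal e" unfolding r_def by simp
    qed
  qed
  thus ?thesis unfolding Rg InfB by simp
qed

end
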